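(* If a segment $s_i$ contains a reflection point $p_j$ of $\mathrm{OPT}$, then $s_i$ has no other intersection with $\mathrm{OPT}$; in particular no other point $p_{j'}$ of $\mathrm{OPT}$ lies on $s_i$.
   Context: Instance: vertical line segments $s_1,\dots,s_n$ in $\mathbb{R}^2$, each of length $1$, with pairwise distinct $x$-coordinates. A tour is a cyclic sequence of points $p_1,\dots,p_\sigma$, each on some segment, with every segment containing at least one $p_j$; the straight segments joining consecutive points are legs; cost is total length. $\mathrm{OPT}$ is a fixed minimum-cost tour, oriented, with no two consecutive points on the same segment and not self-crossing. A point $p_j$ of $\mathrm{OPT}$ on segment $s$ is a reflection point if both incident legs lie in the half-plane $x\le x(s)$ or both lie in $x\ge x(s)$. *)

theory Defs
  imports "HOL-Analysis.Analysis"
begin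

text \<open>Points of the plane are pairs (x,y) :: real \<times> real; the product metric on
real \<times> real is the Euclidean one.\<close>

definition seg :: "(nat \<Rightarrow> real) \<Rightarrow> (nat \<Rightarrow> real) \<Rightarrow> nat \<Rightarrow> (real \<times> real) set" where
  "seg x y i = {(x i, t) | t. y i \<le> t \<and> t \<le> y i + 1}"

definition nxt :: "'a list \<Rightarrow> nat \<Rightarrow> nat" where
  "nxt ps k = (k + 1) mod length ps"

definition prv :: "'a list \<Rightarrow> nat \<Rightarrow> nat" where
  "prv ps k = (k + length ps - 1) mod length ps"

definition leg :: "(real \<times> real) list \<Rightarrow> nat \<Rightarrow> (real \<times> real) set" where
  "leg ps k = closed_segment (ps ! k) (ps ! nxt ps k)"

definition is_tour :: "nat \<Rightarrow> (nat \<Rightarrow> real) \<Rightarrow> (nat \<Rightarrow> real) \<Rightarrow> (real \<times> real) list \<Rightarrow> bool" where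
  "is_tour n x y ps \<longleftrightarrow> ps \<noteq> [] \<and>
     (\<forall>p \<in> set ps. \<exists>i<n. p \<in> seg x y i) \<and>
     (\<forall>i<n. \<exists>p \<in> set ps. p \<in> seg x y i)"

definition tour_cost :: "(real \<times> real) list \<Rightarrow> real" where
  "tour_cost ps = (\<Sum>k<length ps. dist (ps ! k) (ps ! nxt ps k))"

definition tour_set :: "(real \<times> real) list \<Rightarrow> (real \<times> real) set" where
  "tour_set ps = (\<Union>k<length ps. leg ps k)"

definition orient :: "real \<times> real \<Rightarrow> real \<times> real \<Rightarrow> real \<times> real \<Rightarrow> real" where
  "orient a b c = (fst b - fst a) * (snd c - snd a) - (snd b - snd a) * (fst c - fst a)"

definition proper_cross :: "real \<times> real \<Rightarrow> real \<times> real \<Rightarrow> real \<times> real \<Rightarrow> real \<times> real \<Rightarrow> bool" where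
  "proper_cross a b c d \<longleftrightarrow>
     orient a b c * orient a b d < 0 \<and> orient c d a * orient c d b < 0"

definition self_crossing :: "(real \<times> real) list \<Rightarrow> bool" where
  "self_crossing ps \<longleftrightarrow> (\<exists>k < length ps. \<exists>l < length ps. k \<noteq> l \<and>
     proper_cross (ps ! k) (ps ! nxt ps k) (ps ! l) (ps ! nxt ps l))"

definition no_consec_same_seg :: "nat \<Rightarrow> (nat \<Rightarrow> real) \<Rightarrow> (nat \<Rightarrow> real) \<Rightarrow> (real \<times> real) list \<Rightarrow> bool" where
  "no_consec_same_seg n x y ps \<longleftrightarrow>
     (\<forall>k < length ps. \<not> (\<exists>i<n. ps ! k \<in> seg x y i \<and> ps ! nxt ps k \<in> seg x y i))"

definition reflection_point :: "(nat \<Rightarrow> real) \<Rightarrow> (nat \<Rightarrow> real) \<Rightarrow> (real \<times> real) list \<Rightarrow> nat \<Rightarrow> nat \<Rightarrow> bool" where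
  "reflection_point x y ps i j \<longleftrightarrow> ps ! j \<in> seg x y i \<and>
     ((leg ps (prv ps j) \<subseteq> {z. fst z \<le> x i} \<and> leg ps j \<subseteq> {z. fst z \<le> x i}) \<or>
      (leg ps (prv ps j) \<subseteq> {z. fst z \<ge> x i} \<and> leg ps j \<subseteq> {z. fst z \<ge> x i}))"

end

theory Submission imports Defs begin

lemma cs_dist: "(z::real\<times>real) \<in> closed_segment u v \<longleftrightarrow> dist u v = dist u z + dist z v"
  using between[of u v z] between_mem_segment[of u v z] by simp

fun pc :: "(real\<times>real) list \<Rightarrow> real" where
  "pc (a#b#xs) = dist a b + pc (b#xs)" | "pc _ = 0"

fun segs :: "(real\<times>real) list \<Rightarrow> (real\<times>real) set" where
  "segs (a#b#xs) = closed_segment a b \<union> segs (b#xs)" | "segs _ = {}"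

lemma pc_sum: "pc xs = (\<Sum>k<length xs - 1. dist (xs!k) (xs!Suc k))"
proof (induction xs)
  case (Cons a xs)
  show ?case
  proof (cases xs)
    case (Cons b ys)
    have "(\<Sum>k<length (a#xs) - 1. dist ((a#xs)!k) ((a#xs)!Suc k)) = (\<Sum>k<Suc (length ys). dist ((a#xs)!k) ((a#xs)!Suc k))"
      using Cons by simp
    also have "\<dots> = dist a b + (\<Sum>k<length ys. dist (xs!k) (xs!Suc k))"
      unfolding sum.lessThan_Suc_shift using Cons by simp
    finally show ?thesis using Cons.IH Cons by simp
  qed simp
qed simp

lemma segs_un: "segs xs = (\<Union>k<length xs - 1. closed_segment (xs!k) (xs!Suc k))"
proof (induction xs)
  case (Cons a xs)
  show ?case
  proof (cases xs)
    case (Cons b ys)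
    show ?thesis using Cons.IH Cons
      apply simp
      apply (auto simp: less_Suc_eq_0_disj)
      done
  qed simp
qed simp

lemma tour_cost_pc: assumes "ps \<noteq> []" shows "tour_cost ps = pc (ps @ [hd ps])"
proof -
  have "pc (ps @ [hd ps]) = (\<Sum>k<length ps. dist ((ps @ [hd ps])!k) ((ps @ [hd ps])!Suc k))"
    by (simp add: pc_sum)
  also have "\<dots> = tour_cost ps" unfolding tour_cost_def
  proof (rule sum.cong)
    fix k assume k: "k \<in> {..<length ps}"
    show "dist ((ps @ [hd ps])!k) ((ps @ [hd ps])!Suc k) = dist (ps ! k) (ps ! nxt ps k)"
    proof (cases "Suc k < length ps")
      case True thus ?thesis using k by (simp add: nth_append nxt_def)
    next
      case False
      hence "Suc k = length ps" using k by simp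
      thus ?thesis using k assms by (simp add: nth_append nxt_def hd_conv_nth)
    qed
  qed simp
  finally show ?thesis by simp
qed

lemma tour_set_segs: assumes "ps \<noteq> []" shows "tour_set ps = segs (ps @ [hd ps])"
proof -
  have "segs (ps @ [hd ps]) = (\<Union>k<length ps. closed_segment ((ps @ [hd ps])!k) ((ps @ [hd ps])!Suc k))"
    by (simp add: segs_un)
  also have "\<dots> = tour_set ps" unfolding tour_set_def leg_def
  proof (rule SUP_cong)
    fix k assume k: "k \<in> {..<length ps}"
    show "closed_segment ((ps @ [hd ps])!k) ((ps @ [hd ps])!Suc k) = closed_segment (ps ! k) (ps ! nxt ps k)"
    proof (cases "Suc k < length ps")
      case True thus ?thesis using k by (simp add: nth_append nxt_def)
    next
      case False
      hence "Suc k = length ps" using k by simp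
      thus ?thesis using k assms by (simp add: nth_append nxt_def hd_conv_nth)
    qed
  qed simp
  finally show ?thesis by simp
qed

lemma pc_append: "xs \<noteq> [] \<Longrightarrow> ys \<noteq> [] \<Longrightarrow> pc (xs @ ys) = pc xs + dist (last xs) (hd ys) + pc ys"
proof (induction xs)
  case (Cons a xs) thus ?case by (cases xs; cases ys) auto
qed simp

lemma segs_append: "xs \<noteq> [] \<Longrightarrow> ys \<noteq> [] \<Longrightarrow> segs (xs @ ys) = segs xs \<union> closed_segment (last xs) (hd ys) \<union> segs ys"
proof (induction xs)
  case (Cons a xs) thus ?case by (cases xs; cases ys) auto
qed simp

lemma segs_ex: "z \<in> segs R \<Longrightarrow> \<exists>k. Suc k < length R \<and> z \<in> closed_segment (R!k) (R!Suc k)"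
  unfolding segs_un by (auto simp: less_diff_conv)

lemma cost_rotate1: "ps \<noteq> [] \<Longrightarrow> tour_cost (rotate1 ps) = tour_cost ps"
proof (cases ps)
  case (Cons a xs)
  assume "ps \<noteq> []"
  show ?thesis
  proof (cases "xs = []")
    case False
    have "tour_cost (rotate1 ps) = pc (xs @ [a, hd xs])" using Cons False by (simp add: tour_cost_pc)
    also have "\<dots> = pc xs + dist (last xs) a + dist a (hd xs)" using False by (simp add: pc_append)
    also have "\<dots> = dist a (hd xs) + pc (xs @ [a])" using False by (simp add: pc_append)
    also have "\<dots> = pc (a # xs @ [a])" using False by (cases xs) auto
    also have "\<dots> = tour_cost ps" using Cons by (simp add: tour_cost_pc)
    finally show ?thesis .
  qed (use Cons in simp)
qed simp

lemma set_rotate1': "ps \<noteq> [] \<Longrightarrow> tour_set (rotate1 ps) = tour_set ps"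
proof (cases ps)
  case (Cons a xs)
  assume "ps \<noteq> []"
  show ?thesis
  proof (cases "xs = []")
    case False
    have "tour_set (rotate1 ps) = segs (xs @ [a, hd xs])" using Cons False by (simp add: tour_set_segs)
    also have "\<dots> = segs xs \<union> closed_segment (last xs) a \<union> closed_segment a (hd xs)" using False by (simp add: segs_append)
    also have "\<dots> = closed_segment a (hd xs) \<union> segs (xs @ [a])" using False by (auto simp add: segs_append)
    also have "\<dots> = segs (a # xs @ [a])" using False by (cases xs) auto
    also have "\<dots> = tour_set ps" using Cons by (simp add: tour_set_segs)
    finally show ?thesis .
  qed (use Cons in simp)
qed simp

lemma cost_rotate: "ps \<noteq> [] \<Longrightarrow> tour_cost (rotate m ps) = tour_cost ps"
  by (induction m) (auto simp: cost_rotate1)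

lemma set_rotate': "ps \<noteq> [] \<Longrightarrow> tour_set (rotate m ps) = tour_set ps"
  by (induction m) (auto simp: set_rotate1')

lemma fst_cs: assumes "(z::real\<times>real) \<in> closed_segment a b"
  shows "min (fst a) (fst b) \<le> fst z \<and> fst z \<le> max (fst a) (fst b)"
proof -
  have "linear (fst :: real\<times>real \<Rightarrow> real)" using bounded_linear_fst bounded_linear.linear by blast
  hence "fst z \<in> closed_segment (fst a) (fst b)" using closed_segment_linear_image[of fst a b] assms by (metis image_eqI)
  thus ?thesis by (auto simp: closed_segment_eq_real_ivl split: if_splits)
qed

lemma cs_fst_eq: assumes "(z::real\<times>real) \<in> closed_segment p b" "fst z = fst p" "fst b \<noteq> fst p"
  shows "z = p"
proof -
  obtain u where u: "0 \<le> u" "u \<le> 1" "z = (1 - u) *\<^sub>R p + u *\<^sub>R b" using assms(1) in_segment(1) by blast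
  have "fst p = (1 - u) * fst p + u * fst b" using u(3) assms(2) by simp
  hence "u * (fst b - fst p) = 0" by (auto simp: algebra_simps)
  hence "u = 0" using assms(3) by (metis mult_eq_0_iff right_minus_eq)
  thus ?thesis using u by simp
qed

lemma seg_fst: "q \<in> seg x y i \<Longrightarrow> fst q = x i"
  unfolding seg_def by auto

lemma seg_unique: "inj_on x {..<n} \<Longrightarrow> i < n \<Longrightarrow> i' < n \<Longrightarrow> q \<in> seg x y i \<Longrightarrow> q \<in> seg x y i' \<Longrightarrow> i = i'"
  using seg_fst by (metis inj_onD lessThan_iff)

lemma cost_cons: assumes "R \<noteq> []" shows "tour_cost (p # R) = dist p (hd R) + pc R + dist (last R) p"
proof -
  have "tour_cost (p # R) = pc ([p] @ (R @ [p]))" by (simp add: tour_cost_pc)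
  also have "\<dots> = dist p (hd R) + pc (R @ [p])" using assms by (subst pc_append) auto
  also have "\<dots> = dist p (hd R) + pc R + dist (last R) p" using assms by (subst pc_append) auto
  finally show ?thesis .
qed

lemma cost_R: "R \<noteq> [] \<Longrightarrow> tour_cost R = pc R + dist (last R) (hd R)"
  by (simp add: tour_cost_pc pc_append)

lemma shortcut:
  assumes inj: "inj_on x {..<n}" and i: "i<n" and p: "p \<in> seg x y i"
    and tour: "is_tour n x y (p#R)" and R: "R \<noteq> []"
    and T: "T \<noteq> []" "set T \<subseteq> insert q (set R)" "q \<in> set T" "q \<in> seg x y i" "set R \<subseteq> set T"
    and cost: "tour_cost T \<le> pc R + dist (last R) (hd R)"
    and strict: "dist (last R) (hd R) < dist (last R) p + dist p (hd R)"
  shows "is_tour n x y T \<and> tour_cost T < tour_cost (p#R)"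
proof
  show "tour_cost T < tour_cost (p#R)" using cost strict cost_cons[OF R, of p] by simp
  show "is_tour n x y T" unfolding is_tour_def
  proof (intro conjI ballI allI impI)
    show "T \<noteq> []" by fact
  next
    fix r assume "r \<in> set T"
    hence "r = q \<or> r \<in> set R" using T by auto
    thus "\<exists>i<n. r \<in> seg x y i" using tour T i unfolding is_tour_def by auto
  next
    fix i' assume i': "i' < n"
    then obtain r where r: "r \<in> set (p#R)" "r \<in> seg x y i'" using tour unfolding is_tour_def by blast
    show "\<exists>r\<in>set T. r \<in> seg x y i'"
    proof (cases "r = p")
      case True
      hence "i' = i" using seg_unique[OF inj i' i] r p by blast
      thus ?thesis using T by blast
    next
      case False thus ?thesis using r T by auto
    qed
  qed
qed

theorem lemma7:
  fixes n :: nat and x y :: "nat \<Rightarrow> real" and OPT :: "(real \<times> real) list"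
    and i j :: nat
  assumes distinct_x: "inj_on x {..<n}"
    and tour: "is_tour n x y OPT"
    and opt: "\<forall>T. is_tour n x y T \<longrightarrow> tour_cost OPT \<le> tour_cost T"
    and nocons: "no_consec_same_seg n x y OPT"
    and nocross: "\<not> self_crossing OPT"
    and i: "i < n" and j: "j < length OPT"
    and refl: "reflection_point x y OPT i j"
  shows "seg x y i \<inter> tour_set OPT = {OPT ! j}
         \<and> (\<forall>j' < length OPT. j' \<noteq> j \<longrightarrow> OPT ! j' \<notin> seg x y i)"
proof -
  define N where "N = length OPT"
  define p where "p = OPT ! j"
  define L where "L = rotate j OPT"
  define R where "R = tl L"
  have OPTne: "OPT \<noteq> []" using j by auto
  have pseg: "p \<in> seg x y i" using refl unfolding reflection_point_def p_def by blast
  have N2: "N \<ge> 2"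
  proof (rule ccontr)
    assume "\<not> N \<ge> 2"
    hence "N = 1" using j N_def by simp
    hence "nxt OPT j = j" "j = 0" using j N_def by (auto simp: nxt_def)
    thus False using nocons i pseg j unfolding no_consec_same_seg_def p_def by auto
  qed
  have Lne: "L \<noteq> []" and lenL: "length L = N" using OPTne by (auto simp: L_def N_def)
  have L0: "L ! 0 = p" using OPTne nth_rotate[of 0 OPT j] j by (simp add: L_def p_def)
  have LpR: "L = p # R" using Lne L0 unfolding R_def by (metis hd_Cons_tl hd_conv_nth)
  have lenR: "length R = N - 1" using lenL LpR by auto
  have Rne: "R \<noteq> []" using lenR N2 by auto
  define a where "a = OPT ! prv OPT j"
  define b where "b = OPT ! nxt OPT j"
  have hdR: "hd R = b"
  proof -
    have "hd R = L ! 1" using LpR Rne by (simp add: hd_conv_nth)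
    also have "\<dots> = OPT ! ((j + 1) mod N)" using nth_rotate[of 1 OPT j] N2 by (simp add: L_def N_def)
    finally show ?thesis by (simp add: b_def nxt_def N_def)
  qed
  have lastR: "last R = a"
  proof -
    have "last R = last L" using LpR Rne by simp
    also have "\<dots> = L ! (N - 1)" using Lne lenL by (simp add: last_conv_nth)
    also have "\<dots> = OPT ! ((j + (N - 1)) mod N)" using nth_rotate[of "N - 1" OPT j] N2 by (simp add: L_def N_def)
    also have "j + (N - 1) = j + N - 1" using N2 by simp
    finally show ?thesis by (simp add: a_def prv_def N_def)
  qed
  have nxtprv: "nxt OPT (prv OPT j) = j"
  proof -
    have "nxt OPT (prv OPT j) = ((j + N - 1) mod N + 1) mod N" by (simp add: nxt_def prv_def N_def)
    also have "\<dots> = (j + N - 1 + 1) mod N" by (metis mod_add_left_eq)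
    also have "j + N - 1 + 1 = j + N" using N2 by simp
    finally show ?thesis using j N_def by simp
  qed
  have prvlt: "prv OPT j < N" using N2 using OPTne unfolding prv_def N_def by (intro mod_less_divisor) simp
  have nxtlt: "nxt OPT j < N" using OPTne unfolding nxt_def N_def by (intro mod_less_divisor) simp
  have a_not: "a \<notin> seg x y i" using nocons prvlt nxtprv i pseg
    unfolding no_consec_same_seg_def a_def p_def N_def by auto
  have b_not: "b \<notin> seg x y i" using nocons j i pseg
    unfolding no_consec_same_seg_def b_def p_def N_def by auto
  have a_set: "a \<in> set OPT" using prvlt by (simp add: a_def N_def)
  have b_set: "b \<in> set OPT" using nxtlt by (simp add: b_def N_def)
  have fa: "fst a \<noteq> x i"
  proof
    assume "fst a = x i"
    obtain i' where "i' < n" "a \<in> seg x y i'" using tour a_set unfolding is_tour_def by blast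
    moreover hence "x i' = x i" using \<open>fst a = x i\<close> seg_fst by metis
    ultimately have "i' = i" using distinct_x i by (meson inj_onD lessThan_iff)
    thus False using a_not \<open>a \<in> seg x y i'\<close> by simp
  qed
  have fb: "fst b \<noteq> x i"
  proof
    assume "fst b = x i"
    obtain i' where "i' < n" "b \<in> seg x y i'" using tour b_set unfolding is_tour_def by blast
    moreover hence "x i' = x i" using \<open>fst b = x i\<close> seg_fst by metis
    ultimately have "i' = i" using distinct_x i by (meson inj_onD lessThan_iff)
    thus False using b_not \<open>b \<in> seg x y i'\<close> by simp
  qed
  have fp: "fst p = x i" using pseg seg_fst by metis
  have legs: "leg OPT (prv OPT j) = closed_segment a p" "leg OPT j = closed_segment p b"
    unfolding leg_def a_def b_def p_def nxtprv by auto
  have sides: "(fst a \<le> x i \<and> fst b \<le> x i) \<or> (fst a \<ge> x i \<and> fst b \<ge> x i)"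
    using refl unfolding reflection_point_def legs p_def[symmetric]
    by (metis (no_types, lifting) ends_in_segment(1) ends_in_segment(2) mem_Collect_eq subsetD)
  have p_notin: "p \<notin> closed_segment a b"
  proof
    assume "p \<in> closed_segment a b"
    from fst_cs[OF this] sides fa fb fp show False by auto
  qed
  have strict: "dist (last R) (hd R) < dist (last R) p + dist p (hd R)"
  proof -
    have "dist a b \<le> dist a p + dist p b" by (rule dist_triangle)
    moreover have "dist a b \<noteq> dist a p + dist p b" using p_notin cs_dist by blast
    ultimately show ?thesis using hdR lastR by simp
  qed
  have costL: "tour_cost L = tour_cost OPT" using OPTne by (simp add: L_def cost_rotate)
  have tourL: "is_tour n x y (p # R)" using tour LpR[symmetric] unfolding is_tour_def L_def by simp
  have main: False if "T \<noteq> []" "set T \<subseteq> insert q (set R)" "q \<in> set T" "q \<in> seg x y i"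
      "set R \<subseteq> set T" "tour_cost T \<le> pc R + dist (last R) (hd R)" for T q
  proof -
    have "is_tour n x y T \<and> tour_cost T < tour_cost (p#R)"
      by (rule shortcut[OF distinct_x i pseg tourL Rne that strict])
    thus False using opt costL LpR by fastforce
  qed
  have part2: "\<forall>j' < length OPT. j' \<noteq> j \<longrightarrow> OPT ! j' \<notin> seg x y i"
  proof (intro allI impI)
    fix j' assume j': "j' < length OPT" "j' \<noteq> j"
    show "OPT ! j' \<notin> seg x y i"
    proof
      assume q: "OPT ! j' \<in> seg x y i"
      define t where "t = (if j < j' then j' - j else N - j + j')"
      have t: "0 < t" "t < N" "(j + t) mod N = j'" using j j' unfolding t_def N_def by auto
      have "L ! t = OPT ! j'" using nth_rotate[of t OPT j] t by (simp add: L_def N_def)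
      hence "OPT ! j' \<in> set R" using LpR t lenL
        by (metis gr0_conv_Suc nth_Cons_Suc nth_mem Suc_less_eq length_Cons)
      thus False using main[of R "OPT ! j'"] Rne q cost_R[OF Rne] by auto
    qed
  qed
  have part1: "seg x y i \<inter> tour_set OPT \<subseteq> {p}"
  proof
    fix z assume z: "z \<in> seg x y i \<inter> tour_set OPT"
    have fz: "fst z = x i" using z seg_fst by blast
    have "tour_set OPT = tour_set L" using OPTne by (simp add: L_def set_rotate')
    also have "\<dots> = segs (p # R @ [p])" using LpR by (simp add: tour_set_segs)
    also have "\<dots> = closed_segment p (hd R) \<union> segs (R @ [p])" using Rne by (cases R) auto
    also have "\<dots> = closed_segment p b \<union> segs R \<union> closed_segment a p"
      using Rne hdR lastR by (auto simp: segs_append)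
    finally have "z \<in> closed_segment p b \<or> z \<in> segs R \<or> z \<in> closed_segment p a"
      using z by (auto simp: closed_segment_commute)
    moreover have "z \<notin> segs R"
    proof
      assume "z \<in> segs R"
      then obtain k where k: "Suc k < length R" "z \<in> closed_segment (R!k) (R!Suc k)" using segs_ex by blast
      define T where "T = take (Suc k) R @ z # drop (Suc k) R"
      have setT: "set T = insert z (set R)"
        unfolding T_def by (metis Un_insert_right append_take_drop_id set_append list.simps(15))
      have hdT: "hd T = hd R" using k Rne unfolding T_def by (cases R) auto
      have lastT: "last T = last R" using k unfolding T_def by simp
      have lt: "last (take (Suc k) R) = R ! k" using k(1) by (subst last_conv_nth) auto
      have hd_d: "hd (drop (Suc k) R) = R ! Suc k" using k by (simp add: hd_drop_conv_nth)
      have dne: "drop (Suc k) R \<noteq> []" using k by simp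
      have tne: "take (Suc k) R \<noteq> []" using k Rne by simp
      have "pc T = pc (take (Suc k) R) + dist (R!k) z + (dist z (R!Suc k) + pc (drop (Suc k) R))"
        unfolding T_def using pc_append[OF tne, of "z # drop (Suc k) R"] pc_append[of "[z]" "drop (Suc k) R"] dne lt hd_d
        by simp
      also have "\<dots> = pc R"
        using pc_append[OF tne dne] lt hd_d k(2) cs_dist by simp
      finally have "tour_cost T = pc R + dist (last R) (hd R)"
        using cost_R[of T] hdT lastT unfolding T_def by simp
      thus False using main[of T z] setT z by (auto simp: T_def)
    qed
    ultimately show "z \<in> {p}" using cs_fst_eq fz fp fa fb by (metis singletonI)
  qed
  have "p \<in> tour_set OPT" unfolding tour_set_def leg_def using j p_def by auto
  thus ?thesis using part1 part2 pseg p_def by auto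
qed

end
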